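(* Let $\mathcal{A}=\mathcal{R}*_K\mathcal{S}*_L\mathcal{T}\in\mathbb{C}^{I_1\times\cdots\times I_N\times J_1\times\cdots\times J_M}$, where $\mathcal{R}\in\mathbb{C}^{I_1\times\cdots\times I_N\times H_1\times\cdots\times H_K}$, $\mathcal{S}\in\mathbb{C}^{H_1\times\cdots\times H_K\times G_1\times\cdots\times G_L}$ and $\mathcal{T}\in\mathbb{C}^{G_1\times\cdots\times G_L\times J_1\times\cdots\times J_M}$, and let $\mathcal{A}_{\pi\dagger}=\mathcal{T}^{\dagger}*_L(\mathcal{R}^{\dagger}*_N\mathcal{A}*_M\mathcal{T}^{\dagger})^{\dagger}*_K\mathcal{R}^{\dagger}$. Consider the factorization of $\mathcal{A}_{\pi\dagger}$ with factors $\mathcal{R}'=\mathcal{T}^{\dagger}$, $\mathcal{S}'=(\mathcal{R}^{\dagger}*_N\mathcal{A}*_M\mathcal{T}^{\dagger})^{\dagger}$, $\mathcal{T}'=\mathcal{R}^{\dagger}$, and the corresponding product Moore–Penrose inverse $(\mathcal{A}_{\pi\dagger})_{\pi\dagger}=\mathcal{T}'^{\dagger}*_K(\mathcal{R}'^{\dagger}*_M\mathcal{A}_{\pi\dagger}*_N\mathcal{T}'^{\dagger})^{\dagger}*_L\mathcal{R}'^{\dagger}=\mathcal{R}*_K(\mathcal{T}*_M\mathcal{A}_{\pi\dagger}*_N\mathcal{R})^{\dagger}*_L\mathcal{T}$. Then $(\mathcal{A}_{\pi\dagger})_{\pi\dagger}=\mathcal{A}$.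
   Context: $\mathbb{C}^{I_1\times\cdots\times I_N}$ denotes the set of complex tensors of order $N$ and dimension $I_1\times\cdots\times I_N$. For $\mathcal{A}\in\mathbb{C}^{I_1\times\cdots\times I_N\times K_1\times\cdots\times K_N}$ and $\mathcal{B}\in\mathbb{C}^{K_1\times\cdots\times K_N\times J_1\times\cdots\times J_M}$, the Einstein product $\mathcal{A}*_N\mathcal{B}$ is defined by $(\mathcal{A}*_N\mathcal{B})_{i_1\dots i_N j_1\dots j_M}=\sum_{k_1,\dots,k_N}a_{i_1\dots i_N k_1\dots k_N}b_{k_1\dots k_N j_1\dots j_M}$; it is associative. $\mathcal{A}^H$ denotes the conjugate transpose. For $\mathcal{A}\in\mathbb{C}^{I_1\times\cdots\times I_N\times J_1\times\cdots\times J_M}$ the Moore–Penrose inverse $\mathcal{A}^{\dagger}$ is the unique $\mathcal{X}\in\mathbb{C}^{J_1\times\cdots\times J_M\times I_1\times\cdots\times I_N}$ with $\mathcal{A}*_M\mathcal{X}*_N\mathcal{A}=\mathcal{A}$, $\mathcal{X}*_N\mathcal{A}*_M\mathcal{X}=\mathcal{X}$, $(\mathcal{A}*_M\mathcal{X})^H=\mathcal{A}*_M\mathcal{X}$, $(\mathcal{X}*_N\mathcal{A})^H=\mathcal{X}*_N\mathcal{A}$ (in particular $(\mathcal{A}^{\dagger})^{\dagger}=\mathcal{A}$). For a tensor $\mathcal{Z}$ with a factorization $\mathcal{Z}=\mathcal{P}*_k\mathcal{Q}*_l\mathcal{U}$, its product Moore–Penrose inverse relative to that factorization is $\mathcal{U}^{\dagger}*_l(\mathcal{P}^{\dagger}*\mathcal{Z}*\mathcal{U}^{\dagger})^{\dagger}*_k\mathcal{P}^{\dagger}$,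 with contractions over the appropriate shared modes. *)

theory Defs
  imports Complex_Main
begin

text \<open>A tensor in C^{D_1 x ... x D_n} is represented by a function on index lists
  (multi-indices, 0-based) that vanishes outside the valid multi-index set of the
  dimension list D = [D_1,...,D_n].\<close>

definition idx :: "nat list \<Rightarrow> nat list set" where
  "idx D = {x. length x = length D \<and> (\<forall>k<length D. x ! k < D ! k)}"

definition tens :: "nat list \<Rightarrow> (nat list \<Rightarrow> complex) set" where
  "tens D = {A. \<forall>x. x \<notin> idx D \<longrightarrow> A x = 0}"

definition ein :: "nat list \<Rightarrow> nat list \<Rightarrow> nat list \<Rightarrow>
    (nat list \<Rightarrow> complex) \<Rightarrow> (nat list \<Rightarrow> complex) \<Rightarrow> (nat list \<Rightarrow> complex)" where
  "ein I K J A B = (\<lambda>x. if x \<in> idx (I @ J)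
      then (\<Sum>k\<in>idx K. A (take (length I) x @ k) * B (k @ drop (length I) x))
      else 0)"

definition ctr :: "nat list \<Rightarrow> nat list \<Rightarrow> (nat list \<Rightarrow> complex) \<Rightarrow> (nat list \<Rightarrow> complex)" where
  "ctr I J A = (\<lambda>x. if x \<in> idx (J @ I)
      then cnj (A (drop (length J) x @ take (length J) x)) else 0)"

definition is_mpinv :: "nat list \<Rightarrow> nat list \<Rightarrow> (nat list \<Rightarrow> complex) \<Rightarrow> (nat list \<Rightarrow> complex) \<Rightarrow> bool" where
  "is_mpinv I J A X \<longleftrightarrow> X \<in> tens (J @ I) \<and>
     ein I I J (ein I J I A X) A = A \<and>
     ein J J I (ein J I J X A) X = X \<and>
     ctr I I (ein I J I A X) = ein I J I A X \<and>
     ctr J J (ein J I J X A) = ein J I J X A"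

definition mpinv :: "nat list \<Rightarrow> nat list \<Rightarrow> (nat list \<Rightarrow> complex) \<Rightarrow> (nat list \<Rightarrow> complex)" where
  "mpinv I J A = (THE X. is_mpinv I J A X)"

text \<open>Product Moore--Penrose inverse of Z in C^{I x J} relative to a factorization
  Z = P *_K Q *_L U with P in C^{I x K}, U in C^{L x J}:
  U^dag *_L (P^dag *_N Z *_M U^dag)^dag *_K P^dag, an element of C^{J x I}.\<close>
definition pmpinv :: "nat list \<Rightarrow> nat list \<Rightarrow> nat list \<Rightarrow> nat list \<Rightarrow>
    (nat list \<Rightarrow> complex) \<Rightarrow> (nat list \<Rightarrow> complex) \<Rightarrow> (nat list \<Rightarrow> complex) \<Rightarrow> (nat list \<Rightarrow> complex)" where
  "pmpinv I K L J P U Z =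
     ein J K I
       (ein J L K (mpinv L J U)
          (mpinv K L (ein K J L (ein K I J (mpinv I K P) Z) (mpinv L J U))))
       (mpinv I K P)"

end

theory Submission
  imports Defs
begin


definition mm :: "'b set \<Rightarrow> ('a \<Rightarrow> 'b \<Rightarrow> complex) \<Rightarrow> ('b \<Rightarrow> 'c \<Rightarrow> complex) \<Rightarrow> 'a \<Rightarrow> 'c \<Rightarrow> complex" where
  "mm K A B = (\<lambda>i j. \<Sum>k\<in>K. A i k * B k j)"

definition ad :: "('a \<Rightarrow> 'b \<Rightarrow> complex) \<Rightarrow> 'b \<Rightarrow> 'a \<Rightarrow> complex" where
  "ad A = (\<lambda>j i. cnj (A i j))"

definition supp :: "'a set \<Rightarrow> 'b set \<Rightarrow> ('a \<Rightarrow> 'b \<Rightarrow> complex) \<Rightarrow> bool" where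
  "supp S T A \<longleftrightarrow> (\<forall>i j. i \<notin> S \<or> j \<notin> T \<longrightarrow> A i j = 0)"

lemma mm_assoc: "mm L (mm K A B) C = mm K A (mm L B C)"
  unfolding mm_def
  by (auto simp: sum_distrib_left sum_distrib_right mult.assoc intro!: ext sum.swap)

lemma ad_mm: "ad (mm K A B) = mm K (ad B) (ad A)"
  unfolding mm_def ad_def by (auto simp: cnj_sum mult.commute intro!: ext)

lemma ad_ad[simp]: "ad (ad A) = A"
  unfolding ad_def by auto

lemma supp_mm: "supp S K A \<Longrightarrow> supp K T B \<Longrightarrow> supp S T (mm K A B)"
  unfolding supp_def mm_def by auto

lemma supp_ad: "supp S T A \<Longrightarrow> supp T S (ad A)"
  unfolding supp_def ad_def by auto

definition mv :: "'b set \<Rightarrow> ('a \<Rightarrow> 'b \<Rightarrow> complex) \<Rightarrow> ('b \<Rightarrow> complex) \<Rightarrow> 'a \<Rightarrow> complex" where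
  "mv S M v = (\<lambda>i. \<Sum>k\<in>S. M i k * v k)"

definition ip :: "'a set \<Rightarrow> ('a \<Rightarrow> complex) \<Rightarrow> ('a \<Rightarrow> complex) \<Rightarrow> complex" where
  "ip S u v = (\<Sum>k\<in>S. cnj (u k) * v k)"

lemma ip_herm:
  assumes "\<And>k l. cnj (P k l) = P l k"
  shows "ip S (mv S P u) v = ip S u (mv S P v)"
proof -
  have "ip S (mv S P u) v = (\<Sum>k\<in>S. \<Sum>l\<in>S. cnj (P k l) * cnj (u l) * v k)"
    by (simp add: ip_def mv_def cnj_sum sum_distrib_right mult.assoc)
  also have "\<dots> = (\<Sum>l\<in>S. \<Sum>k\<in>S. cnj (P k l) * cnj (u l) * v k)"
    by (rule sum.swap)
  also have "\<dots> = ip S u (mv S P v)"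
    by (simp add: ip_def mv_def assms sum_distrib_left mult.assoc mult.left_commute)
  finally show ?thesis .
qed

lemma ip_self_real: "cnj (ip S c c) = ip S c c"
  by (simp add: ip_def cnj_sum mult.commute)

lemma ip_self_zero:
  assumes "finite S" "ip S c c = 0" "k \<in> S" shows "c k = 0"
proof -
  have e: "ip S c c = of_real (\<Sum>k\<in>S. (cmod (c k))\<^sup>2)"
    unfolding ip_def of_real_sum
    by (rule sum.cong) (auto simp: complex_norm_square[symmetric] mult.commute)
  hence "(\<Sum>k\<in>S. (cmod (c k))\<^sup>2) = 0" using assms(2) by (metis of_real_eq_0_iff)
  hence "\<forall>k\<in>S. (cmod (c k))\<^sup>2 = 0"
    using assms(1) by (subst (asm) sum_nonneg_eq_0_iff) auto
  thus ?thesis using assms(3) by auto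
qed

lemma mv_mm: "mv S M (mv K N v) = mv K (mm S M N) v"
  unfolding mv_def mm_def
  by (auto simp: sum_distrib_left sum_distrib_right mult.assoc intro!: ext sum.swap)

lemma mv_diff: "mv S M (\<lambda>i. u i - v i) = (\<lambda>i. mv S M u i - mv S M v i)"
  unfolding mv_def by (auto simp: right_diff_distrib sum_subtractf)

lemma ip_diff1: "ip S (\<lambda>i. u i - v i) w = ip S u w - ip S v w"
  unfolding ip_def by (auto simp: left_diff_distrib sum_subtractf)

lemma ip_add2: "ip S w (\<lambda>i. u i + v i) = ip S w u + ip S w v"
  unfolding ip_def by (auto simp: distrib_left sum.distrib)

lemma mv_mmY: "mv S (mm Y A W) a i = (\<Sum>j\<in>Y. A i j * (\<Sum>k\<in>S. W j k * a k))"
  unfolding mv_def mm_def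
  by (auto simp: sum_distrib_left sum_distrib_right mult.assoc intro!: sum.swap)

lemma gs:
  fixes A :: "'a \<Rightarrow> 'b \<Rightarrow> complex"
  assumes S: "finite S" and Y: "finite Y" and Aout: "\<forall>i j. i \<notin> S \<longrightarrow> A i j = 0"
  shows "\<exists>W. (\<forall>k l. cnj (mm Y A W k l) = mm Y A W l k) \<and>
             (\<forall>j\<in>Y. mv S (mm Y A W) (\<lambda>i. A i j) = (\<lambda>i. A i j))"
  using Y
proof (induction Y rule: finite_induct)
  case empty
  show ?case by (auto simp: mm_def)
next
  case (insert y Y)
  then obtain W where H: "\<forall>k l. cnj (mm Y A W k l) = mm Y A W l k"
    and F: "\<forall>j\<in>Y. mv S (mm Y A W) (\<lambda>i. A i j) = (\<lambda>i. A i j)" by blast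
  define P where "P = mm Y A W"
  define a where "a = (\<lambda>i. A i y)"
  define c where "c = (\<lambda>i. a i - mv S P a i)"
  define nc where "nc = ip S c c"
  have HP: "\<And>k l. cnj (P k l) = P l k" using H P_def by auto
  have FP: "\<And>j. j \<in> Y \<Longrightarrow> mv S P (\<lambda>i. A i j) = (\<lambda>i. A i j)" using F P_def by auto
  have Pout: "\<And>i k. i \<notin> S \<Longrightarrow> P i k = 0" using Aout by (simp add: P_def mm_def)
  have cout: "\<And>i. i \<notin> S \<Longrightarrow> c i = 0"
    using Aout Pout by (simp add: c_def a_def mv_def)
  have idem: "mm S P P = P"
  proof -
    have "mm S P P = mm Y (mm S P A) W" by (simp add: P_def mm_assoc)
    also have "\<dots> = mm Y A W"
    proof (rule ext, rule ext)
      fix i m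
      have "\<And>j. j \<in> Y \<Longrightarrow> mm S P A i j = A i j"
        using FP by (metis mm_def mv_def)
      thus "mm Y (mm S P A) W i m = mm Y A W i m"
        unfolding mm_def[of Y] by (auto intro: sum.cong)
    qed
    finally show ?thesis by (simp add: P_def)
  qed
  have Pc: "mv S P c = (\<lambda>i. 0)"
  proof -
    have "mv S P c = (\<lambda>i. mv S P a i - mv S P (mv S P a) i)"
      unfolding c_def by (rule mv_diff)
    also have "mv S P (mv S P a) = mv S P a" by (simp add: mv_mm idem)
    finally show ?thesis by simp
  qed
  have ortho: "\<And>j. j \<in> Y \<Longrightarrow> ip S c (\<lambda>i. A i j) = 0"
  proof -
    fix j assume j: "j \<in> Y"
    have "ip S c (\<lambda>i. A i j) = ip S a (\<lambda>i. A i j) - ip S (mv S P a) (\<lambda>i. A i j)"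
      unfolding c_def by (rule ip_diff1)
    also have "ip S (mv S P a) (\<lambda>i. A i j) = ip S a (mv S P (\<lambda>i. A i j))"
      by (rule ip_herm) (rule HP)
    finally show "ip S c (\<lambda>i. A i j) = 0" using FP[OF j] by simp
  qed
  have ca: "ip S c a = nc"
  proof -
    have "a = (\<lambda>i. c i + mv S P a i)" by (simp add: c_def)
    hence "ip S c a = ip S c c + ip S c (mv S P a)" by (metis ip_add2)
    also have "ip S c (mv S P a) = ip S (mv S P c) a"
      by (rule ip_herm[symmetric]) (rule HP)
    also have "\<dots> = 0" by (simp add: Pc ip_def)
    finally show ?thesis by (simp add: nc_def)
  qed
  show ?case
  proof (cases "nc = 0")
    case True
    have c0: "\<And>i. c i = 0"
      using ip_self_zero[OF S] True cout unfolding nc_def by metis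
    define W' where "W' = W(y := (\<lambda>_. 0))"
    have e: "mm (insert y Y) A W' = P"
      using insert(1,2) unfolding P_def mm_def W'_def
      by (auto intro!: ext sum.cong)
    have "mv S P a = a" using c0 by (auto simp: c_def fun_eq_iff)
    thus ?thesis using e HP FP by (auto simp: a_def intro!: exI[of _ W'])
  next
    case False
    define d where "d = (\<lambda>i'. cnj (c i') / nc)"
    define W' where "W' = (\<lambda>j i'. if j = y then d i'
        else W j i' - (\<Sum>k\<in>S. W j k * a k) * d i')"
    define P' where "P' = (\<lambda>i i'. P i i' + c i * d i')"
    have e: "mm (insert y Y) A W' = P'"
    proof (rule ext, rule ext)
      fix i i'
      have "mm (insert y Y) A W' i i' = A i y * d i' + (\<Sum>j\<in>Y. A i j * W' j i')"
        using insert(1,2) by (simp add: mm_def W'_def)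
      also have "(\<Sum>j\<in>Y. A i j * W' j i') =
          (\<Sum>j\<in>Y. A i j * W j i') - (\<Sum>j\<in>Y. A i j * (\<Sum>k\<in>S. W j k * a k)) * d i'"
      proof -
        have "(\<Sum>j\<in>Y. A i j * W' j i') =
            (\<Sum>j\<in>Y. A i j * W j i' - A i j * (\<Sum>k\<in>S. W j k * a k) * d i')"
          using insert(2) by (intro sum.cong) (auto simp: W'_def right_diff_distrib mult.assoc)
        thus ?thesis by (simp add: sum_subtractf sum_distrib_right)
      qed
      also have "(\<Sum>j\<in>Y. A i j * (\<Sum>k\<in>S. W j k * a k)) = mv S P a i"
        by (simp add: P_def mv_mmY)
      finally show "mm (insert y Y) A W' i i' = P' i i'"
        by (simp add: P'_def P_def c_def a_def mm_def algebra_simps)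
    qed
    have ncr: "cnj nc = nc" unfolding nc_def by (rule ip_self_real)
    have HP': "\<And>k l. cnj (P' k l) = P' l k"
      using HP ncr by (simp add: P'_def d_def mult.commute)
    have mvP': "\<And>v. mv S P' v = (\<lambda>i. mv S P v i + c i * (ip S c v / nc))"
      by (auto simp: mv_def P'_def d_def ip_def distrib_right sum.distrib sum_distrib_left
          sum_divide_distrib mult.assoc mult.left_commute intro!: ext)
    have FP': "\<And>j. j \<in> insert y Y \<Longrightarrow> mv S P' (\<lambda>i. A i j) = (\<lambda>i. A i j)"
    proof -
      fix j assume "j \<in> insert y Y"
      then consider "j = y" | "j \<in> Y" by auto
      thus "mv S P' (\<lambda>i. A i j) = (\<lambda>i. A i j)"
      proof cases
        case 1
        have "mv S P' a = a" using mvP' ca False by (auto simp: c_def fun_eq_iff)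
        thus ?thesis using 1 by (simp add: a_def)
      next
        case 2
        thus ?thesis using mvP' ortho FP by auto
      qed
    qed
    show ?thesis using e HP' FP' by (auto intro!: exI[of _ W'])
  qed
qed



definition mp :: "'a set \<Rightarrow> 'b set \<Rightarrow> ('a\<Rightarrow>'b\<Rightarrow>complex) \<Rightarrow> ('b\<Rightarrow>'a\<Rightarrow>complex) \<Rightarrow> bool" where
  "mp S T A G \<longleftrightarrow> supp T S G \<and> mm S (mm T A G) A = A \<and> mm T (mm S G A) G = G \<and>
     ad (mm T A G) = mm T A G \<and> ad (mm S G A) = mm S G A"

lemma ls13:
  fixes A :: "'a \<Rightarrow> 'b \<Rightarrow> complex"
  assumes S: "finite S" and T: "finite T" and A: "supp S T A"
  shows "\<exists>X. supp T S X \<and> mm S (mm T A X) A = A \<and> ad (mm T A X) = mm T A X"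
proof -
  have Aout: "\<forall>i j. i \<notin> S \<longrightarrow> A i j = 0" using A by (auto simp: supp_def)
  obtain W where H: "\<forall>k l. cnj (mm T A W k l) = mm T A W l k"
    and F: "\<forall>j\<in>T. mv S (mm T A W) (\<lambda>i. A i j) = (\<lambda>i. A i j)"
    using gs[OF S T Aout] by blast
  define P where "P = mm T A W"
  have Pr: "\<And>i k. i \<notin> S \<Longrightarrow> P i k = 0" using Aout by (simp add: P_def mm_def)
  have Pc: "\<And>i k. k \<notin> S \<Longrightarrow> P i k = 0" using Pr H P_def by (metis complex_cnj_zero)
  define X where "X = (\<lambda>j i. if j \<in> T \<and> i \<in> S then W j i else 0)"
  have eX: "mm T A X = P"
  proof (rule ext, rule ext)
    fix i i'
    show "mm T A X i i' = P i i'"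
    proof (cases "i' \<in> S")
      case True thus ?thesis by (simp add: P_def mm_def X_def)
    next
      case False thus ?thesis using Pc by (simp add: mm_def X_def)
    qed
  qed
  have sX: "supp T S X" by (simp add: supp_def X_def)
  have e1: "mm S P A = A"
  proof (rule ext, rule ext)
    fix i j
    show "mm S P A i j = A i j"
    proof (cases "j \<in> T")
      case True thus ?thesis using F by (metis P_def mm_def mv_def)
    next
      case False thus ?thesis using A by (simp add: mm_def supp_def)
    qed
  qed
  have e2: "ad P = P" using H by (auto simp: ad_def P_def)
  show ?thesis using sX eX e1 e2 by auto
qed

lemma mp_exists:
  fixes A :: "'a \<Rightarrow> 'b \<Rightarrow> complex"
  assumes S: "finite S" and T: "finite T" and A: "supp S T A"
  shows "\<exists>G. mp S T A G"
proof -
  obtain X where sX: "supp T S X" and x1: "mm S (mm T A X) A = A" and x2: "ad (mm T A X) = mm T A X"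
    using ls13[OF S T A] by blast
  obtain X2 where sX2: "supp S T X2" and y1: "mm T (mm S (ad A) X2) (ad A) = ad A"
      and y2: "ad (mm S (ad A) X2) = mm S (ad A) X2"
    using ls13[OF T S supp_ad[OF A]] by blast
  define Y where "Y = ad X2"
  have sY: "supp T S Y" using sX2 by (simp add: Y_def supp_ad)
  have z1: "mm S (mm T A Y) A = A"
  proof -
    have "ad (mm T (mm S (ad A) X2) (ad A)) = ad (ad A)" using y1 by simp
    thus ?thesis by (simp add: ad_mm Y_def mm_assoc)
  qed
  have z2: "ad (mm S Y A) = mm S Y A"
  proof -
    have "mm S Y A = ad (mm S (ad A) X2)" by (simp add: ad_mm Y_def)
    thus ?thesis using y2 by simp
  qed
  define G where "G = mm T (mm S Y A) X"
  have sG: "supp T S G" unfolding G_def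
    by (rule supp_mm[OF supp_mm[OF sY A] sX])
  have AG: "mm T A G = mm T A X"
  proof -
    have "mm T A G = mm T (mm S (mm T A Y) A) X" by (simp add: G_def mm_assoc)
    thus ?thesis using z1 by simp
  qed
  have GA: "mm S G A = mm S Y A"
  proof -
    have "mm S G A = mm S Y (mm S (mm T A X) A)" by (simp add: G_def mm_assoc)
    thus ?thesis using x1 by simp
  qed
  have g1: "mm S (mm T A G) A = A" using AG x1 by simp
  have g2: "mm T (mm S G A) G = G"
  proof -
    have "mm T (mm S Y A) (mm T (mm S Y A) X) = mm T (mm S Y (mm S (mm T A Y) A)) X"
      by (simp add: mm_assoc)
    thus ?thesis using z1 GA by (simp add: G_def)
  qed
  have "mp S T A G" unfolding mp_def using sG g1 g2 AG GA x2 z2 by simp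
  thus ?thesis by blast
qed

lemma mp_unique:
  assumes m1: "mp S T A G1" and m2: "mp S T A G2"
  shows "G1 = G2"
proof -
  have a1: "mm S (mm T A G1) A = A" and g1: "mm T (mm S G1 A) G1 = G1"
    and h1: "mm T (ad G1) (ad A) = mm T A G1" and k1: "mm S (ad A) (ad G1) = mm S G1 A"
    using m1 unfolding mp_def by (auto simp: ad_mm)
  have a2: "mm S (mm T A G2) A = A" and g2: "mm T (mm S G2 A) G2 = G2"
    and h2: "mm T (ad G2) (ad A) = mm T A G2" and k2: "mm S (ad A) (ad G2) = mm S G2 A"
    using m2 unfolding mp_def by (auto simp: ad_mm)
  have adA1: "ad A = mm S (ad A) (mm T A G2)"
  proof -
    have "ad A = ad (mm S (mm T A G2) A)" using a2 by simp
    also have "\<dots> = mm S (ad A) (mm T (ad G2) (ad A))" by (simp add: ad_mm mm_assoc)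
    also have "\<dots> = mm S (ad A) (mm T A G2)" by (simp only: h2)
    finally show ?thesis .
  qed
  have adA2: "ad A = mm T (mm S G1 A) (ad A)"
  proof -
    have "ad A = ad (mm S (mm T A G1) A)" using a1 by simp
    also have "\<dots> = mm T (mm S (ad A) (ad G1)) (ad A)" by (simp add: ad_mm mm_assoc)
    also have "\<dots> = mm T (mm S G1 A) (ad A)" by (simp only: k1)
    finally show ?thesis .
  qed
  have "G1 = mm S G1 (mm T A G1)" using g1 by (simp add: mm_assoc)
  also have "\<dots> = mm S G1 (mm T (ad G1) (ad A))" using h1 by simp
  also have "\<dots> = mm S G1 (mm T (ad G1) (mm S (ad A) (mm T A G2)))" by (subst adA1) (rule refl)
  also have "\<dots> = mm S G1 (mm S (mm T (ad G1) (ad A)) (mm T A G2))" by (simp only: mm_assoc)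
  also have "\<dots> = mm S G1 (mm S (mm T A G1) (mm T A G2))" using h1 by simp
  also have "\<dots> = mm T (mm S (mm T (mm S G1 A) G1) A) G2" by (simp only: mm_assoc)
  also have "\<dots> = mm T (mm S G1 A) G2" using g1 by simp
  finally have e1: "G1 = mm T (mm S G1 A) G2" .
  have "G2 = mm T (mm S G2 A) G2" using g2 by simp
  also have "\<dots> = mm T (mm S (ad A) (ad G2)) G2" using k2 by simp
  also have "\<dots> = mm T (mm S (mm T (mm S G1 A) (ad A)) (ad G2)) G2" by (subst adA2) (rule refl)
  also have "\<dots> = mm T (mm S G1 A) (mm T (mm S (ad A) (ad G2)) G2)" by (simp only: mm_assoc)
  also have "\<dots> = mm T (mm S G1 A) (mm T (mm S G2 A) G2)" using k2 by simp
  also have "\<dots> = mm T (mm S G1 A) G2" using g2 by simp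
  finally show ?thesis using e1 by simp
qed

definition mpm :: "'a set \<Rightarrow> 'b set \<Rightarrow> ('a\<Rightarrow>'b\<Rightarrow>complex) \<Rightarrow> ('b\<Rightarrow>'a\<Rightarrow>complex)" where
  "mpm S T A = (THE G. mp S T A G)"

lemma mpm_eq: "mp S T A G \<Longrightarrow> mpm S T A = G"
  unfolding mpm_def by (rule the_equality) (auto intro: mp_unique)

lemma mpm_mp: "finite S \<Longrightarrow> finite T \<Longrightarrow> supp S T A \<Longrightarrow> mp S T A (mpm S T A)"
  using mp_exists mpm_eq by metis

lemma mp_sym: "mp S T A G \<Longrightarrow> supp S T A \<Longrightarrow> mp T S G A"
  unfolding mp_def by auto

lemma mpm_mpm: "finite S \<Longrightarrow> finite T \<Longrightarrow> supp S T A \<Longrightarrow> mpm T S (mpm S T A) = A"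
  by (rule mpm_eq, rule mp_sym) (auto intro: mpm_mp)



lemma idx_append:
  "x \<in> idx (I @ J) \<longleftrightarrow> take (length I) x \<in> idx I \<and> drop (length I) x \<in> idx J"
proof
  assume x: "x \<in> idx (I @ J)"
  hence len: "length x = length I + length J" by (simp add: idx_def)
  have c: "\<forall>k<length I + length J. x ! k < (I @ J) ! k" using x by (simp add: idx_def)
  have "take (length I) x \<in> idx I"
    unfolding idx_def
  proof (intro CollectI conjI allI impI)
    show "length (take (length I) x) = length I" using len by simp
  next
    fix k assume k: "k < length I"
    hence "x ! k < (I @ J) ! k" using c by simp
    thus "take (length I) x ! k < I ! k" using k by (simp add: nth_append)
  qed
  moreover have "drop (length I) x \<in> idx J"
    unfolding idx_def
  proof (intro CollectI conjI allI impI)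
    show "length (drop (length I) x) = length J" using len by simp
  next
    fix k assume k: "k < length J"
    hence "x ! (length I + k) < (I @ J) ! (length I + k)" using c by (meson nat_add_left_cancel_less)
    thus "drop (length I) x ! k < J ! k" using k len by (simp add: nth_append)
  qed
  ultimately show "take (length I) x \<in> idx I \<and> drop (length I) x \<in> idx J" by simp
next
  assume h: "take (length I) x \<in> idx I \<and> drop (length I) x \<in> idx J"
  hence l1: "length (take (length I) x) = length I" and l2: "length (drop (length I) x) = length J"
    by (auto simp: idx_def)
  hence len: "length x = length I + length J" by simp
  show "x \<in> idx (I @ J)"
    unfolding idx_def
  proof (intro CollectI conjI allI impI)
    show "length x = length (I @ J)" using len by simp
  next
    fix k assume k: "k < length (I @ J)"
    show "x ! k < (I @ J) ! k"
    proof (cases "k < length I")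
      case True
      hence "take (length I) x ! k < I ! k" using h by (auto simp: idx_def)
      thus ?thesis using True by (simp add: nth_append)
    next
      case False
      hence "drop (length I) x ! (k - length I) < J ! (k - length I)"
        using h k by (auto simp: idx_def)
      thus ?thesis using False len by (simp add: nth_append)
    qed
  qed
qed

lemma idx_app2: "i \<in> idx I \<Longrightarrow> j \<in> idx J \<Longrightarrow> i @ j \<in> idx (I @ J)"
proof -
  assume "i \<in> idx I" "j \<in> idx J"
  moreover have "length i = length I" using \<open>i \<in> idx I\<close> by (simp add: idx_def)
  ultimately show ?thesis by (simp add: idx_append)
qed

lemma finite_idx: "finite (idx D)"
proof -
  have "idx D \<subseteq> {x. set x \<subseteq> {..<Max (insert 0 (set D))} \<and> length x = length D}"
  proof
    fix x assume x: "x \<in> idx D"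
    have "set x \<subseteq> {..<Max (insert 0 (set D))}"
    proof
      fix v assume "v \<in> set x"
      then obtain k where k: "k < length x" "x ! k = v" by (auto simp: in_set_conv_nth)
      hence "v < D ! k" "k < length D" using x by (auto simp: idx_def)
      moreover have "D ! k \<le> Max (insert 0 (set D))" using \<open>k < length D\<close> by simp
      ultimately have "v < Max (insert 0 (set D))" by (meson less_le_trans)
      thus "v \<in> {..<Max (insert 0 (set D))}" by simp
    qed
    thus "x \<in> {x. set x \<subseteq> {..<Max (insert 0 (set D))} \<and> length x = length D}"
      using x by (simp add: idx_def)
  qed
  thus ?thesis by (rule finite_subset) (rule finite_lists_length_eq, simp)
qed

definition tm :: "nat list \<Rightarrow> nat list \<Rightarrow> (nat list \<Rightarrow> complex) \<Rightarrow> nat list \<Rightarrow> nat list \<Rightarrow> complex" where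
  "tm I J A = (\<lambda>i j. if i \<in> idx I \<and> j \<in> idx J then A (i @ j) else 0)"

definition mt :: "nat list \<Rightarrow> nat list \<Rightarrow> (nat list \<Rightarrow> nat list \<Rightarrow> complex) \<Rightarrow> nat list \<Rightarrow> complex" where
  "mt I J M = (\<lambda>x. if x \<in> idx (I @ J) then M (take (length I) x) (drop (length I) x) else 0)"

lemma supp_tm: "supp (idx I) (idx J) (tm I J A)"
  by (simp add: supp_def tm_def)

lemma len_idx: "i \<in> idx I \<Longrightarrow> length i = length I"
  by (simp add: idx_def)

lemma tm_mt: "supp (idx I) (idx J) M \<Longrightarrow> tm I J (mt I J M) = M"
  by (auto simp: tm_def mt_def supp_def idx_app2 len_idx intro!: ext)

lemma mt_tm: "A \<in> tens (I @ J) \<Longrightarrow> mt I J (tm I J A) = A"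
  by (auto simp: tm_def mt_def tens_def idx_append intro!: ext)

lemma mt_tens: "mt I J M \<in> tens (I @ J)"
  by (simp add: mt_def tens_def)

lemma ein_mt: "ein I K J A B = mt I J (mm (idx K) (tm I K A) (tm K J B))"
  by (auto simp: ein_def mt_def mm_def tm_def idx_append intro!: ext sum.cong)

lemma ctr_mt: "ctr I J A = mt J I (ad (tm I J A))"
  by (auto simp: ctr_def mt_def ad_def tm_def idx_append intro!: ext)

lemma tm_ein: "tm I J (ein I K J A B) = mm (idx K) (tm I K A) (tm K J B)"
  unfolding ein_mt by (rule tm_mt) (intro supp_mm supp_tm)

lemma tm_ctr: "tm J I (ctr I J A) = ad (tm I J A)"
  unfolding ctr_mt by (rule tm_mt) (intro supp_ad supp_tm)

lemma ein_tens: "ein I K J A B \<in> tens (I @ J)"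
  unfolding ein_mt by (rule mt_tens)

lemma ctr_tens: "ctr I J A \<in> tens (J @ I)"
  unfolding ctr_mt by (rule mt_tens)

lemma tens_eq: "X \<in> tens (I @ J) \<Longrightarrow> Y \<in> tens (I @ J) \<Longrightarrow> X = Y \<longleftrightarrow> tm I J X = tm I J Y"
  by (metis mt_tm)

lemma is_mpinv_iff:
  assumes "A \<in> tens (I @ J)" "X \<in> tens (J @ I)"
  shows "is_mpinv I J A X \<longleftrightarrow> mp (idx I) (idx J) (tm I J A) (tm J I X)"
proof -
  let ?a = "tm I J A" and ?x = "tm J I X"
  have e1: "ein I I J (ein I J I A X) A = A \<longleftrightarrow> mm (idx I) (mm (idx J) ?a ?x) ?a = ?a"
    using tens_eq[OF ein_tens assms(1)] by (simp add: tm_ein)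
  have e2: "ein J J I (ein J I J X A) X = X \<longleftrightarrow> mm (idx J) (mm (idx I) ?x ?a) ?x = ?x"
    using tens_eq[OF ein_tens assms(2)] by (simp add: tm_ein)
  have e3: "ctr I I (ein I J I A X) = ein I J I A X \<longleftrightarrow> ad (mm (idx J) ?a ?x) = mm (idx J) ?a ?x"
    using tens_eq[OF ctr_tens ein_tens] by (simp add: tm_ein tm_ctr)
  have e4: "ctr J J (ein J I J X A) = ein J I J X A \<longleftrightarrow> ad (mm (idx I) ?x ?a) = mm (idx I) ?x ?a"
    using tens_eq[OF ctr_tens ein_tens] by (simp add: tm_ein tm_ctr)
  show ?thesis unfolding is_mpinv_def mp_def e1 e2 e3 e4 using assms(2) supp_tm by simp
qed



lemma mp_facts:
  assumes "mp S T A G"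
  shows "supp T S G" "mm S (mm T A G) A = A" "mm T (mm S G A) G = G"
    "ad (mm T A G) = mm T A G" "ad (mm S G A) = mm S G A"
  using assms unfolding mp_def by auto

lemma key:
  fixes r :: "'i \<Rightarrow> 'h \<Rightarrow> complex" and s :: "'h \<Rightarrow> 'g \<Rightarrow> complex" and t :: "'g \<Rightarrow> 'j \<Rightarrow> complex"
  assumes fI: "finite sI" and fH: "finite sH" and fG: "finite sG" and fJ: "finite sJ"
    and sr: "supp sI sH r" and ss: "supp sH sG s" and st: "supp sG sJ t"
  defines "rd \<equiv> mpm sI sH r" and "td \<equiv> mpm sG sJ t"
    and "a \<equiv> mm sG (mm sH r s) t"
  defines "M \<equiv> mm sJ (mm sI rd a) td"
  defines "Md \<equiv> mpm sH sG M"
  shows "mm sG (mm sH (mpm sH sI rd) (mpm sG sH (mm sI (mm sJ (mpm sJ sG td)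
            (mm sH (mm sG td Md) rd)) (mpm sH sI rd)))) (mpm sJ sG td) = a"
proof -
  have mr: "mp sI sH r rd" unfolding rd_def by (rule mpm_mp[OF fI fH sr])
  have mt': "mp sG sJ t td" unfolding td_def by (rule mpm_mp[OF fG fJ st])
  note R = mp_facts[OF mr] and T = mp_facts[OF mt']
  have rr: "mpm sH sI rd = r" unfolding rd_def by (rule mpm_mpm[OF fI fH sr])
  have tt: "mpm sJ sG td = t" unfolding td_def by (rule mpm_mpm[OF fG fJ st])
  have sa: "supp sI sJ a" unfolding a_def by (intro supp_mm sr ss st)
  have sM: "supp sH sG M" unfolding M_def by (intro supp_mm sa R(1) T(1))
  have mM: "mp sH sG M Md" unfolding Md_def by (rule mpm_mp[OF fH fG sM])
  note MM = mp_facts[OF mM]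
  have MdMd: "mpm sG sH Md = M" unfolding Md_def by (rule mpm_mpm[OF fH fG sM])
  define E where "E = mm sI rd r"
  define F where "F = mm sJ t td"
  have EE: "mm sH E E = E"
  proof -
    have "mm sH E E = mm sI (mm sH (mm sI rd r) rd) r" unfolding E_def by (simp only: mm_assoc)
    thus ?thesis using R(3) by (simp add: E_def)
  qed
  have FF: "mm sG F F = F"
  proof -
    have "mm sG F F = mm sJ (mm sG (mm sJ t td) t) td" unfolding F_def by (simp only: mm_assoc)
    thus ?thesis using T(2) by (simp add: F_def)
  qed
  have adE: "ad E = E" unfolding E_def using R(5) .
  have adF: "ad F = F" unfolding F_def using T(4) .
  define K1 where "K1 = mm sJ (mm sG s t) td"
  define K2 where "K2 = mm sH E s"
  have M1: "M = mm sH E K1" unfolding M_def E_def K1_def a_def by (simp add: mm_assoc)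
  have M2: "M = mm sG K2 F" unfolding M_def F_def K2_def E_def a_def by (simp add: mm_assoc)
  have adM1: "ad M = mm sH (ad K1) E" using M1 adE by (simp add: ad_mm)
  have adM2: "ad M = mm sG F (ad K2)" using M2 adF by (simp add: ad_mm)
  have MdA: "Md = mm sH Md (mm sG (ad Md) (ad M))"
  proof -
    have "Md = mm sH Md (mm sG M Md)" using MM(3) by (simp add: mm_assoc)
    also have "mm sG M Md = ad (mm sG M Md)" using MM(4) by simp
    finally show ?thesis by (simp add: ad_mm)
  qed
  have MdB: "Md = mm sG (mm sH (ad M) (ad Md)) Md"
  proof -
    have "Md = mm sG (mm sH Md M) Md" using MM(3) by simp
    also have "mm sH Md M = ad (mm sH Md M)" using MM(5) by simp
    finally show ?thesis by (simp add: ad_mm)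
  qed
  have key1: "mm sH Md E = Md"
  proof -
    have "mm sH Md E = mm sH (mm sH Md (mm sG (ad Md) (ad M))) E" by (subst MdA) (rule refl)
    also have "\<dots> = mm sH Md (mm sG (ad Md) (mm sH (ad K1) (mm sH E E)))"
      by (simp add: adM1 mm_assoc)
    also have "\<dots> = mm sH Md (mm sG (ad Md) (ad M))" by (simp add: EE adM1 mm_assoc)
    also have "\<dots> = Md" by (rule MdA[symmetric])
    finally show ?thesis .
  qed
  have key2: "mm sG F Md = Md"
  proof -
    have "mm sG F Md = mm sG F (mm sG (mm sH (ad M) (ad Md)) Md)" by (subst MdB) (rule refl)
    also have "\<dots> = mm sG (mm sG F F) (mm sH (ad K2) (mm sG (ad Md) Md))"
      by (simp add: adM2 mm_assoc)
    also have "\<dots> = mm sG (mm sH (ad M) (ad Md)) Md" by (simp add: FF adM2 mm_assoc)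
    also have "\<dots> = Md" by (rule MdB[symmetric])
    finally show ?thesis .
  qed
  have X: "mm sI (mm sJ t (mm sH (mm sG td Md) rd)) r = Md"
  proof -
    have "mm sI (mm sJ t (mm sH (mm sG td Md) rd)) r = mm sH (mm sG F Md) E"
      by (simp add: E_def F_def mm_assoc)
    thus ?thesis using key1 key2 by simp
  qed
  have "mm sG (mm sH r M) t = mm sG (mm sH (mm sI (mm sH r rd) r) s) (mm sG (mm sJ t td) t)"
    unfolding M_def a_def by (simp add: mm_assoc)
  also have "\<dots> = a" using R(2) T(2) by (simp add: a_def)
  finally have fin: "mm sG (mm sH r M) t = a" .
  show ?thesis using rr tt X MdMd fin by simp
qed

lemma mpinv_mt:
  assumes A: "A \<in> tens (I @ J)"
  shows "mpinv I J A = mt J I (mpm (idx I) (idx J) (tm I J A))"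
proof -
  let ?G = "mpm (idx I) (idx J) (tm I J A)"
  have m: "mp (idx I) (idx J) (tm I J A) ?G" by (rule mpm_mp[OF finite_idx finite_idx supp_tm])
  hence sG: "supp (idx J) (idx I) ?G" by (simp add: mp_def)
  show ?thesis unfolding mpinv_def
  proof (rule the_equality)
    show "is_mpinv I J A (mt J I ?G)"
      using is_mpinv_iff[OF A mt_tens] tm_mt[OF sG] m by simp
  next
    fix X assume X: "is_mpinv I J A X"
    hence Xt: "X \<in> tens (J @ I)" by (simp add: is_mpinv_def)
    hence "mp (idx I) (idx J) (tm I J A) (tm J I X)" using is_mpinv_iff[OF A] X by simp
    hence "?G = tm J I X" by (rule mpm_eq)
    thus "X = mt J I ?G" using mt_tm[OF Xt] by simp
  qed
qed

lemma tm_mpinv: "A \<in> tens (I @ J) \<Longrightarrow> tm J I (mpinv I J A) = mpm (idx I) (idx J) (tm I J A)"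
  using mpinv_mt tm_mt mpm_mp[OF finite_idx finite_idx supp_tm] mp_facts(1) by metis

lemma mpinv_tens: "A \<in> tens (I @ J) \<Longrightarrow> mpinv I J A \<in> tens (J @ I)"
  using mpinv_mt mt_tens by metis

theorem theorem3p12:
  fixes I H G J :: "nat list"
    and R S T A :: "nat list \<Rightarrow> complex"
  assumes "\<forall>d\<in>set (I @ H @ G @ J). 0 < d"
    and "R \<in> tens (I @ H)" and "S \<in> tens (H @ G)" and "T \<in> tens (G @ J)"
    and "A = ein I G J (ein I H G R S) T"
  shows "pmpinv J G H I (mpinv G J T) (mpinv I H R) (pmpinv I H G J R T A) = A"
proof -
  have At: "A \<in> tens (I @ J)" using assms(5) ein_tens by simp
  have Lt: "pmpinv J G H I (mpinv G J T) (mpinv I H R) (pmpinv I H G J R T A) \<in> tens (I @ J)"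
    unfolding pmpinv_def by (rule ein_tens)
  have "tm I J (pmpinv J G H I (mpinv G J T) (mpinv I H R) (pmpinv I H G J R T A)) = tm I J A"
    using assms(2-5)
    apply (simp add: pmpinv_def tm_ein tm_mpinv ein_tens mpinv_tens)
    apply (rule key[OF finite_idx finite_idx finite_idx finite_idx supp_tm supp_tm supp_tm])
    done
  thus ?thesis using tens_eq[OF Lt At] by simp
qed

end
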